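(* Let $p\in\mathbb{C}[x]$ of degree $n\ge 2$ have $k\ge2$ distinct roots, let $\hat z_1,\dots,\hat z_n\in\mathbb{C}$, $\hat p:=p_n\prod_{j=1}^n(x-\hat z_j)$, and suppose $\|p-\hat p\|_1\le 2^{-b}\|p\|_1$, where $b$ is a power of two with $b\ge\max(8n,n\log n)$ and, for all $i=1,\dots,k$, $$2^{-b/(2m_i)}\le \frac{1}{2n^2},\qquad 2^{-b/(2m_i)}\le\frac{\sigma_i}{2n},\qquad 2^{-b/2}\le \frac{|P_i|}{16(n+1)2^{\tau_p}M(z_i)^n}.$$ Then for every $i$, the disk $\Delta(z_i,2^{-b/(2m_i)})$ contains exactly $m_i$ of the points $\hat z_1,\dots,\hat z_n$ (counted with repetition by index). Moreover, for $i\ne j$ and any $\hat z\in\Delta(z_i,2^{-b/(2m_i)})$, $\hat z'\in\Delta(z_j,2^{-b/(2m_j)})$ among these points, $$\Big(1-\frac1n\Big)|z_i-z_j|\le|\hat z-\hat z'|\le\Big(1+\frac1n\Big)|z_i-z_j|.$$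
   Context: Logarithms are base 2; $M(x)=\max(1,|x|)$; $\Delta(z,r)$ is the closed disk of center $z$ and radius $r$. Write $p=\sum_i p_ix^i=p_n\prod_{j=1}^k(x-z_j)^{m_j}$ with distinct roots $z_j$ of multiplicities $m_j$; $\|p\|_1=\sum_i|p_i|$; $\tau_p$ is the smallest non-negative integer with $|p_i|/|p_n|\le2^{\tau_p}$ for all $i<n$; $\sigma_i:=\min_{j\ne i}|z_i-z_j|$; $P_i:=\prod_{j\ne i}(z_i-z_j)^{m_j}$. *)

theory Defs
  imports "HOL-Analysis.Analysis" "HOL-Computational_Algebra.Polynomial"
begin

definition root_set :: "complex poly \<Rightarrow> complex set" where
  "root_set p = {z. poly p z = 0}"

definition norm1 :: "complex poly \<Rightarrow> real" where
  "norm1 p = (\<Sum>i\<le>degree p. cmod (coeff p i))"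

definition tau :: "complex poly \<Rightarrow> nat" where
  "tau p = (LEAST t::nat. \<forall>i<degree p. cmod (coeff p i) / cmod (lead_coeff p) \<le> 2 ^ t)"

definition Mx :: "complex \<Rightarrow> real" where
  "Mx x = max 1 (cmod x)"

definition sep :: "complex poly \<Rightarrow> complex \<Rightarrow> real" where
  "sep p z = Min ((\<lambda>w. cmod (z - w)) ` (root_set p - {z}))"

definition Pprod :: "complex poly \<Rightarrow> complex \<Rightarrow> complex" where
  "Pprod p z = (\<Prod>w\<in>root_set p - {z}. (z - w) ^ order w p)"

end

theory Submission
  imports Defs "HOL-Computational_Algebra.Fundamental_Theorem_Algebra"
begin



lemma poly_factor:
  fixes q :: "complex poly"
  assumes "q \<noteq> 0"
  shows "poly q y = lead_coeff q * (\<Prod>x\<in>{x. poly q x = 0}. (y - x) ^ order x q)"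
proof -
  have "poly (smult (lead_coeff q) (\<Prod>z|poly q z = 0. [:-z, 1:] ^ order z q)) y = poly q y"
    by (subst complex_poly_decompose) simp
  thus ?thesis by (simp add: poly_prod)
qed

lemma degree_order_sum:
  fixes q :: "complex poly"
  assumes "q \<noteq> 0"
  shows "degree q = (\<Sum>x\<in>{x. poly q x = 0}. order x q)"
proof -
  have "degree q = degree (smult (lead_coeff q) (\<Prod>z|poly q z = 0. [:-z, 1:] ^ order z q))"
    by (subst complex_poly_decompose) simp
  also have "\<dots> = (\<Sum>x\<in>{x. poly q x = 0}. order x q)"
    using assms by (simp add: degree_prod_sum_eq degree_power_eq)
  finally show ?thesis .
qed

lemma circle_prod:
  fixes t :: real and y :: complex
  assumes t: "t > 0" and N: "N > 0"
  shows "(\<Prod>u\<in>{u::complex. u ^ N = of_real t ^ N}. cmod (u - y)) = cmod (of_real t ^ N - y ^ N)"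
proof -
  define c :: complex where "c = of_real t ^ N"
  have c0: "c \<noteq> 0" using t by (simp add: c_def)
  define q where "q = monom (1::complex) N + [:-c:]"
  have pq: "poly q x = x ^ N - c" for x by (simp add: q_def poly_monom)
  have dq: "degree q = N" using N by (simp add: q_def degree_monom_eq degree_add_eq_left)
  have lq: "lead_coeff q = 1" using N dq by (simp add: q_def coeff_pCons split: nat.split)
  have q0: "q \<noteq> 0" using lq by auto
  have Z: "{x. poly q x = 0} = {u. u ^ N = c}" by (simp add: pq)
  have finZ: "finite {u::complex. u ^ N = c}" using N by auto
  have cardZ: "card {u::complex. u ^ N = c} = N" using c0 N by (rule card_nth_roots)
  have sumo: "(\<Sum>x\<in>{u. u ^ N = c}. order x q) = N"
    using degree_order_sum[OF q0] dq Z by simp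
  have o1: "order x q \<ge> 1" if "x \<in> {u. u ^ N = c}" for x
    using that q0 order_root[of q x] by (simp add: Suc_le_eq pq)
  have oe: "order x q = 1" if "x \<in> {u. u ^ N = c}" for x
  proof (rule ccontr)
    assume "order x q \<noteq> 1"
    with o1[OF that] have "1 < order x q" by simp
    hence "(\<Sum>x\<in>{u. u ^ N = c}. (1::nat)) < (\<Sum>x\<in>{u. u ^ N = c}. order x q)"
      using finZ that o1 by (intro sum_strict_mono_ex1) auto
    thus False using sumo cardZ by simp
  qed
  have "poly q y = (\<Prod>x\<in>{u. u ^ N = c}. (y - x))"
    using poly_factor[OF q0, of y] lq Z oe by simp
  hence "cmod (y ^ N - c) = (\<Prod>x\<in>{u. u ^ N = c}. cmod (y - x))"
    by (simp add: pq prod_norm)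
  thus ?thesis by (simp add: c_def norm_minus_commute)
qed




lemma norm_poly_le: "cmod (poly q x) \<le> norm1 q * Mx x ^ degree q"
proof -
  have M1: "1 \<le> Mx x" "cmod x \<le> Mx x" by (auto simp: Mx_def)
  have "cmod (poly q x) = cmod (\<Sum>i\<le>degree q. coeff q i * x ^ i)" by (simp add: poly_altdef)
  also have "\<dots> \<le> (\<Sum>i\<le>degree q. cmod (coeff q i) * cmod x ^ i)"
    by (rule order_trans[OF norm_sum]) (simp add: norm_mult norm_power)
  also have "\<dots> \<le> (\<Sum>i\<le>degree q. cmod (coeff q i) * Mx x ^ degree q)"
  proof (intro sum_mono mult_left_mono)
    fix i assume "i \<in> {..degree q}"
    hence "cmod x ^ i \<le> Mx x ^ i" by (intro power_mono) (use M1 in auto)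
    also have "\<dots> \<le> Mx x ^ degree q" using \<open>i \<in> _\<close> M1 by (intro power_increasing) auto
    finally show "cmod x ^ i \<le> Mx x ^ degree q" .
  qed auto
  also have "\<dots> = norm1 q * Mx x ^ degree q" by (simp add: norm1_def sum_distrib_right)
  finally show ?thesis .
qed

lemma one_minus_pow_ge:
  assumes "n \<ge> (2::nat)"
  shows "(1 - 1 / real n) ^ (n - 1) \<ge> exp (-1)"
proof -
  define k where "k = n - 1"
  have k1: "k \<ge> 1" and nk: "real n = real k + 1" using assms by (auto simp: k_def)
  have "1 + 1 / real k \<le> exp (1 / real k)" by (rule exp_ge_add_one_self)
  hence "inverse (exp (1 / real k)) \<le> inverse (1 + 1 / real k)"
    using k1 by (intro le_imp_inverse_le) (auto simp: add_pos_pos)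
  also have "inverse (1 + 1 / real k) = 1 - 1 / real n"
    using k1 by (simp add: nk field_simps)
  finally have a: "exp (- (1 / real k)) \<le> 1 - 1 / real n" by (simp add: exp_minus)
  have "exp (-1) = exp (- (1 / real k)) ^ k"
    using k1 by (simp add: exp_of_nat_mult[symmetric])
  also have "\<dots> \<le> (1 - 1 / real n) ^ k" by (intro power_mono a) auto
  finally show ?thesis by (simp add: k_def)
qed

lemma exp_bound: "exp (1::real) * exp (1/2) \<le> 21/4"
proof -
  have "exp (1/2::real) ^ 2 = exp 1" by (simp add: exp_of_nat_mult[symmetric])
  also have "\<dots> \<le> 3" by (rule exp_le)
  also have "(3::real) \<le> (7/4)^2" by (simp add: power2_eq_square)
  finally have "exp (1/2::real) \<le> 7/4"
    by (rule power2_le_imp_le) simp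
  hence "exp (1::real) * exp (1/2) \<le> 3 * (7/4)"
    using exp_le by (intro mult_mono) auto
  thus ?thesis by simp
qed

lemma one_plus_pow_le:
  assumes "s \<ge> (0::real)" "real n * s \<le> 1/2"
  shows "(1 + s) ^ n \<le> exp (1/2)"
proof -
  have "(1 + s) ^ n \<le> exp s ^ n" using assms by (intro power_mono) auto
  also have "\<dots> = exp (real n * s)" by (simp add: exp_of_nat_mult)
  also have "\<dots> \<le> exp (1/2)" using assms by simp
  finally show ?thesis .
qed

lemma Mx_shift: "Mx x \<le> Mx z * (1 + cmod (x - z))"
proof -
  have t: "cmod x \<le> cmod z + cmod (x - z)" by (metis norm_triangle_sub add.commute)
  have a: "1 \<le> Mx z" "cmod z \<le> Mx z" by (auto simp: Mx_def)
  have d: "cmod (x - z) \<le> Mx z * cmod (x - z)"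
    using a by (simp add: mult_le_cancel_right1)
  have "Mx x \<le> Mx z + Mx z * cmod (x - z)"
    unfolding Mx_def[of x] using t a d norm_ge_zero[of "x - z"] by (intro max.boundedI) linarith+
  thus ?thesis by (simp add: distrib_left)
qed




locale L =
  fixes p :: "complex poly" and zh :: "nat \<Rightarrow> complex" and b :: nat and n :: nat
    and ph :: "complex poly" and r :: "complex \<Rightarrow> real"
  assumes n_def: "n = degree p"
  and ph_def: "ph = smult (lead_coeff p) (\<Prod>j\<in>{1..n}. [:- zh j, 1:])"
  and r_def: "r = (\<lambda>z. (2::real) powr (- real b / (2 * real (order z p))))"
  and n2: "n \<ge> 2" and k2: "card (root_set p) \<ge> 2"
  and close: "norm1 (p - ph) \<le> 2 powr (- real b) * norm1 p"
  and c1: "\<And>z. z \<in> root_set p \<Longrightarrow> r z \<le> 1 / (2 * real n ^ 2)"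
  and c2: "\<And>z. z \<in> root_set p \<Longrightarrow> r z \<le> sep p z / (2 * real n)"
  and c3: "\<And>z. z \<in> root_set p \<Longrightarrow>
              2 powr (- real b / 2) \<le> cmod (Pprod p z) / (16 * (real n + 1) * 2 ^ tau p * Mx z ^ n)"
begin

abbreviation "S \<equiv> root_set p"
abbreviation "lc \<equiv> lead_coeff p"

lemma p0: "p \<noteq> 0" using n2 n_def by auto
lemma lc0: "lc \<noteq> 0" using p0 by simp
lemma S_eq: "S = {x. poly p x = 0}" by (simp add: root_set_def)
lemma finS: "finite S" using p0 by (simp add: S_eq poly_roots_finite)

lemma factor: "poly p x = lc * (\<Prod>w\<in>S. (x - w) ^ order w p)"
  unfolding S_eq by (rule poly_factor[OF p0])

lemma degsum: "n = (\<Sum>w\<in>S. order w p)"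
  unfolding S_eq n_def by (rule degree_order_sum[OF p0])

lemma ord_pos: "z \<in> S \<Longrightarrow> order z p \<ge> 1"
  using p0 order_root[of p z] by (simp add: S_eq Suc_le_eq)

lemma ph_eval: "poly ph x = lc * (\<Prod>j\<in>{1..n}. (x - zh j))"
  by (simp add: ph_def poly_prod)

lemma deg_ph: "degree ph \<le> n"
proof -
  have "degree (\<Prod>j\<in>{1..n}. [:- zh j, 1:]) \<le> (\<Sum>j\<in>{1..n}. degree [:- zh j, 1:])"
    using degree_prod_sum_le[of "{1..n}" "\<lambda>j. [:- zh j, 1:]"] by (simp add: o_def)
  also have "\<dots> = n" by simp
  finally show ?thesis by (simp add: ph_def)
qed

lemma Mx_ge1: "1 \<le> Mx x" by (simp add: Mx_def)

lemma Ebound: "cmod (poly (p - ph) x) \<le> 2 powr (- real b) * norm1 p * Mx x ^ n"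
proof -
  have dg: "degree (p - ph) \<le> n" using deg_ph n_def by (intro degree_diff_le) auto
  have "cmod (poly (p - ph) x) \<le> norm1 (p - ph) * Mx x ^ degree (p - ph)" by (rule norm_poly_le)
  also have "\<dots> \<le> norm1 (p - ph) * Mx x ^ n"
    using dg Mx_ge1 by (intro mult_left_mono power_increasing) (auto simp: norm1_def intro: sum_nonneg)
  also have "\<dots> \<le> 2 powr (- real b) * norm1 p * Mx x ^ n"
    using close by (intro mult_right_mono zero_le_power) (use Mx_ge1[of x] in linarith)+
  finally show ?thesis .
qed

lemma norm1p: "norm1 p \<le> (real n + 1) * 2 ^ tau p * cmod lc"
proof -
  define A where "A = (\<Sum>i<degree p. cmod (coeff p i) / cmod lc)"
  obtain t :: nat where "A < 2 ^ t" using real_arch_pow[of 2 A] by auto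
  hence ex: "\<forall>i<degree p. cmod (coeff p i) / cmod lc \<le> 2 ^ t"
  proof (intro allI impI)
    fix i assume "A < 2 ^ t" "i < degree p"
    have "cmod (coeff p i) / cmod lc \<le> A"
      unfolding A_def using \<open>i < degree p\<close> by (intro member_le_sum) auto
    thus "cmod (coeff p i) / cmod lc \<le> 2 ^ t" using \<open>A < 2 ^ t\<close> by simp
  qed
  have T: "\<forall>i<degree p. cmod (coeff p i) / cmod lc \<le> 2 ^ tau p"
    unfolding tau_def by (rule LeastI_ex) (use ex in blast)
  have lcp: "cmod lc > 0" using lc0 by simp
  have each: "cmod (coeff p i) \<le> 2 ^ tau p * cmod lc" if "i \<le> degree p" for i
  proof (cases "i = degree p")
    case True
    have "1 * cmod lc \<le> 2 ^ tau p * cmod lc" by (intro mult_right_mono) auto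
    thus ?thesis using True by simp
  next
    case False
    with that have "i < degree p" by simp
    with T have "cmod (coeff p i) / cmod lc \<le> 2 ^ tau p" by blast
    thus ?thesis using lcp by (simp add: divide_le_eq)
  qed
  have "norm1 p \<le> (\<Sum>i\<le>degree p. 2 ^ tau p * cmod lc)"
    unfolding norm1_def by (intro sum_mono each) auto
  also have "\<dots> = (real n + 1) * 2 ^ tau p * cmod lc" by (simp add: n_def)
  finally show ?thesis .
qed

lemma sep_le: "z \<in> S \<Longrightarrow> w \<in> S \<Longrightarrow> w \<noteq> z \<Longrightarrow> sep p z \<le> cmod (z - w)"
  unfolding sep_def using finS by (intro Min_le) auto

lemma P_eq: "cmod (Pprod p z) = (\<Prod>w\<in>S - {z}. cmod (z - w) ^ order w p)"
  by (simp add: Pprod_def norm_power flip: prod_norm)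

lemma P_pos: "cmod (Pprod p z) > 0"
  unfolding P_eq using finS by (intro prod_pos) auto

lemma sum_other: "z \<in> S \<Longrightarrow> (\<Sum>w\<in>S - {z}. order w p) = n - order z p"
  using degsum finS by (simp add: sum_diff1_nat)

lemma r_pos: "r z > 0" by (simp add: r_def)

lemma rpow: "z \<in> S \<Longrightarrow> r z ^ order z p = 2 powr (- real b / 2)"
proof -
  assume z: "z \<in> S"
  have "r z ^ order z p = 2 powr ((- real b / (2 * real (order z p))) * real (order z p))"
    by (simp add: r_def powr_realpow[symmetric] powr_powr)
  also have "(- real b / (2 * real (order z p))) * real (order z p) = - real b / 2"
    using ord_pos[OF z] by (simp add: field_simps)
  finally show ?thesis .
qed

lemma sep_pos: "z \<in> S \<Longrightarrow> sep p z > 0"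
  proof -
  assume z: "z \<in> S"
  have "0 < r z" by (rule r_pos)
  also have "\<dots> \<le> sep p z / (2 * real n)" using c2[OF z] .
  finally show ?thesis using n2 by (simp add: zero_less_divide_iff)
qed

end



lemma norm1_nonneg: "0 \<le> norm1 q" by (simp add: norm1_def sum_nonneg)

context L begin

lemma pointwise:
  assumes z: "z \<in> S" and t: "t = cmod (x - z)" and lo: "r z \<le> t" and hi: "t \<le> 2 * r z"
  shows "cmod lc * t ^ order z p * cmod (Pprod p z) * exp (-1) \<le> cmod (poly p x)"
    and "cmod (poly (p - ph) x) * t \<le> r z * (21/64) * cmod (poly p x)"
proof -
  define m where "m = order z p"
  define R where "R = r z"
  define P where "P = cmod (Pprod p z)"
  have m1: "m \<ge> 1" using ord_pos[OF z] by (simp add: m_def)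
  have Rpos: "R > 0" using r_pos by (simp add: R_def)
  have tpos: "t > 0" using lo Rpos by (simp add: R_def)
  have npos: "real n > 0" using n2 by simp
  have Pp: "P > 0" using P_pos by (simp add: P_def)
  have sepR: "2 * real n * R \<le> sep p z"
    using c2[OF z] npos by (simp add: R_def field_simps)
  have ntle: "real n * t \<le> 1/2"
  proof -
    have "R \<le> 1 / (2 * real n ^ 2)" using c1[OF z] by (simp add: R_def)
    hence "2 * real n ^ 2 * R \<le> 1" using npos by (simp add: field_simps)
    have "real n * (real n * t) \<le> real n * (real n * (2 * R))"
      using hi npos by (intro mult_left_mono) (auto simp: R_def)
    also have "\<dots> = 2 * real n ^ 2 * R" by (simp add: power2_eq_square algebra_simps)
    finally have "real n * (real n * t) \<le> 1" using \<open>2 * real n ^ 2 * R \<le> 1\<close> by linarith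
    hence "real n * t \<le> 1 / real n" using npos by (simp add: field_simps)
    also have "\<dots> \<le> 1/2" using n2 by (simp add: field_simps)
    finally show ?thesis .
  qed
  have dist_w: "cmod (z - w) * (1 - 1 / real n) \<le> cmod (x - w)" if w: "w \<in> S - {z}" for w
  proof -
    have "sep p z \<le> cmod (z - w)" using sep_le[OF z] w by auto
    moreover have "real n * t \<le> real n * (2 * R)"
      using hi npos by (intro mult_left_mono) (auto simp: R_def)
    ultimately have "real n * t \<le> cmod (z - w)" using sepR by (simp add: algebra_simps)
    hence "t \<le> cmod (z - w) / real n" using npos by (simp add: field_simps)
    moreover have "cmod (z - w) - t \<le> cmod (x - w)"
      using norm_triangle_ineq2[of "z - w" "z - x"] t by (simp add: norm_minus_commute)
    ultimately show ?thesis by (simp add: algebra_simps)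
  qed
  have base: "0 \<le> 1 - 1 / real n" "1 - 1 / real n \<le> 1" using n2 by (auto simp: field_simps)
  have px: "cmod (poly p x) = cmod lc * t ^ m * (\<Prod>w\<in>S - {z}. cmod (x - w) ^ order w p)"
  proof -
    have "poly p x = lc * ((x - z) ^ m * (\<Prod>w\<in>S - {z}. (x - w) ^ order w p))"
      using factor[of x] prod.remove[OF finS z, of "\<lambda>w. (x - w) ^ order w p"] by (simp add: m_def)
    thus ?thesis by (simp only: norm_mult prod_norm[symmetric] norm_power t)
  qed
  have "(\<Prod>w\<in>S - {z}. (cmod (z - w) * (1 - 1 / real n)) ^ order w p)
        \<le> (\<Prod>w\<in>S - {z}. cmod (x - w) ^ order w p)"
    using dist_w base by (intro prod_mono conjI power_mono zero_le_power mult_nonneg_nonneg) auto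
  moreover have "(\<Prod>w\<in>S - {z}. (cmod (z - w) * (1 - 1 / real n)) ^ order w p)
        = P * (1 - 1 / real n) ^ (n - m)"
  proof -
    have "(\<Prod>w\<in>S - {z}. (cmod (z - w) * (1 - 1 / real n)) ^ order w p)
      = (\<Prod>w\<in>S - {z}. cmod (z - w) ^ order w p) * (\<Prod>w\<in>S - {z}. (1 - 1 / real n) ^ order w p)"
      by (simp add: power_mult_distrib prod.distrib)
    also have "(\<Prod>w\<in>S - {z}. (1 - 1 / real n) ^ order w p) = (1 - 1 / real n) ^ (\<Sum>w\<in>S - {z}. order w p)"
      by (rule power_sum[symmetric])
    also have "(\<Sum>w\<in>S - {z}. order w p) = n - m" using sum_other[OF z] by (simp add: m_def)
    finally show ?thesis by (simp add: P_def P_eq)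
  qed
  moreover have "exp (-1) \<le> (1 - 1 / real n) ^ (n - m)"
  proof -
    have "exp (-1) \<le> (1 - 1 / real n) ^ (n - 1)" by (rule one_minus_pow_ge[OF n2])
    also have "\<dots> \<le> (1 - 1 / real n) ^ (n - m)" using base m1 by (intro power_decreasing) auto
    finally show ?thesis .
  qed
  ultimately have prodge: "P * exp (-1) \<le> (\<Prod>w\<in>S - {z}. cmod (x - w) ^ order w p)"
    using Pp mult_left_mono[of "exp (-1)" "(1 - 1 / real n) ^ (n - m)" P] by linarith
  have "cmod lc * t ^ m * (P * exp (-1)) \<le> cmod lc * t ^ m * (\<Prod>w\<in>S - {z}. cmod (x - w) ^ order w p)"
    by (rule mult_left_mono[OF prodge]) (use tpos in simp)
  hence part1: "cmod lc * t ^ m * P * exp (-1) \<le> cmod (poly p x)"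
    unfolding px by (simp add: mult.assoc)
  thus "cmod lc * t ^ order z p * cmod (Pprod p z) * exp (-1) \<le> cmod (poly p x)"
    by (simp add: m_def P_def)
  define K where "K = (real n + 1) * 2 ^ tau p * Mx z ^ n"
  have Kpos: "K > 0" using Mx_ge1[of z] by (simp add: K_def)
  have c3': "16 * K * 2 powr (- real b / 2) \<le> P"
    using c3[OF z] Kpos by (simp add: K_def P_def field_simps)
  have Rm: "R ^ m = 2 powr (- real b / 2)" using rpow[OF z] by (simp add: R_def m_def)
  have Mxx: "Mx x ^ n \<le> Mx z ^ n * (1 + t) ^ n"
    using Mx_shift[of x z] t by (simp add: power_mult_distrib[symmetric] power_mono Mx_ge1 order_trans[OF zero_le_one])
  have opt: "(1 + t) ^ n \<le> exp (1/2)" using one_plus_pow_le[of t n] tpos ntle by simp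
  have b2: "(2::real) powr (- real b) = 2 powr (- real b / 2) * 2 powr (- real b / 2)"
    by (simp flip: powr_add)
  have "cmod (poly (p - ph) x) \<le> 2 powr (- real b) * norm1 p * Mx x ^ n" by (rule Ebound)
  also have "\<dots> \<le> 2 powr (- real b) * ((real n + 1) * 2 ^ tau p * cmod lc) * (Mx z ^ n * (1 + t) ^ n)"
    using norm1p Mxx norm1_nonneg[of p] by (intro mult_mono) (auto intro: zero_le_power order_trans[OF zero_le_one Mx_ge1])
  also have "\<dots> = 2 powr (- real b / 2) * (2 powr (- real b / 2) * K) * cmod lc * (1 + t) ^ n"
    by (simp add: b2 K_def algebra_simps)
  also have "\<dots> \<le> 2 powr (- real b / 2) * (P / 16) * cmod lc * exp (1/2)"
    using c3' opt Kpos Pp tpos by (intro mult_mono) (auto simp: field_simps)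
  finally have Eb: "cmod (poly (p - ph) x) \<le> R ^ m * (P / 16) * cmod lc * exp (1/2)"
    by (simp add: Rm)
  have Rmt: "R ^ m * t \<le> R * t ^ m"
  proof -
    have "R ^ (m - 1) \<le> t ^ (m - 1)" using lo Rpos by (intro power_mono) (auto simp: R_def)
    hence "R * R ^ (m - 1) * t \<le> R * (t * t ^ (m - 1))" using Rpos tpos
      by (simp add: mult_left_mono mult.commute mult.left_commute)
    moreover have "R * R ^ (m - 1) = R ^ m" "t * t ^ (m - 1) = t ^ m"
      using m1 by (simp_all flip: power_Suc)
    ultimately show ?thesis by (simp add: mult.commute)
  qed
  have "cmod (poly (p - ph) x) * t \<le> R ^ m * t * (P / 16) * cmod lc * exp (1/2)"
    using Eb tpos by (simp add: mult_right_mono algebra_simps)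
  also have "\<dots> \<le> R * t ^ m * (P / 16) * cmod lc * exp (1/2)"
    using Rmt Pp by (intro mult_right_mono) auto
  also have "\<dots> = R * (exp 1 * exp (1/2) / 16) * (cmod lc * t ^ m * P * exp (-1))"
    by (simp add: exp_minus field_simps)
  also have "\<dots> \<le> R * ((21/4) / 16) * cmod (poly p x)"
    using exp_bound part1 Rpos tpos Pp lc0
    by (intro mult_mono) (auto intro: divide_right_mono)
  finally show "cmod (poly (p - ph) x) * t \<le> r z * (21/64) * cmod (poly p x)"
    by (simp add: R_def)
qed

end



lemma num_fact: "(16::real) < (2496/2205) ^ 30"
proof -
  have "(16::real) * 2205^30 < 2496^30" by simp
  thus ?thesis by (simp add: power_divide field_simps)
qed

lemma final_contra:
  fixes L Q W ts tb :: real and c m N n :: nat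
  assumes L: "0 < L" and Q: "0 < Q" and W: "0 \<le> W" and ts: "0 < ts" and tb: "tb = ts * (39/21)"
    and cm: "c < m" and N: "N = 30 * n" and n: "n \<ge> 1"
    and h1: "L * (1/2)^n * ts^(N*c) * W \<le> (21/16)^N * L * ts^(m*N) * 2^n * Q"
    and h2: "(4/5)^N * L * tb^(m*N) * (1/2)^n * Q \<le> L * 2^n * tb^(N*c) * W"
  shows False
proof -
  obtain kk where kk: "m = c + kk" "kk \<ge> 1" using cm by (intro that[of "m - c"]) auto
  define AA where "AA = ts^(N*c)"
  define BB where "BB = ts^(N*kk)"
  define CC where "CC = tb^(N*c)"
  define DD where "DD = tb^(N*kk)"
  have four: "(2::real)^n * 2^n = 4^n" by (simp flip: power_mult_distrib)
  have four': "(2::real)^n * (2^n * x) = 4^n * x" for x by (simp flip: power_mult_distrib)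
  have tbp: "tb > 0" using ts tb by simp
  have Ap: "AA > 0" and Bp: "BB > 0" and Cp: "CC > 0" using ts tbp by (simp_all add: AA_def BB_def CC_def)
  have e1: "ts^(m*N) = AA * BB" by (simp add: AA_def BB_def kk power_add algebra_simps)
  have e2: "tb^(m*N) = CC * DD" by (simp add: CC_def DD_def kk power_add algebra_simps)
  have "L * (AA * ((1/2)^n * W)) \<le> L * (AA * ((21/16)^N * BB * 2^n * Q))"
    using h1 unfolding e1 AA_def[symmetric] by (simp add: mult_ac)
  hence h1': "AA * ((1/2)^n * W) \<le> AA * ((21/16)^N * BB * 2^n * Q)"
    using L by (simp only: mult_le_cancel_left_pos)
  hence "(1/2)^n * W \<le> (21/16)^N * BB * 2^n * Q" using Ap by simp
  hence W1: "W \<le> (21/16)^N * BB * 4^n * Q"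
    by (simp add: field_simps power_divide four four')
  have "L * (CC * ((4/5)^N * DD * (1/2)^n * Q)) \<le> L * (CC * (2^n * W))"
    using h2 unfolding e2 CC_def[symmetric] by (simp add: mult_ac)
  hence h2': "CC * ((4/5)^N * DD * (1/2)^n * Q) \<le> CC * (2^n * W)"
    using L by (simp only: mult_le_cancel_left_pos)
  hence "(4/5)^N * DD * (1/2)^n * Q \<le> 2^n * W" using Cp by simp
  hence W2: "(4/5)^N * DD * Q \<le> 4^n * W"
    by (simp add: field_simps power_divide four four')
  have "(4/5)^N * DD * Q \<le> 4^n * ((21/16)^N * BB * 4^n * Q)"
    using order_trans[OF W2 mult_left_mono[OF W1]] by simp
  also have "\<dots> = 16^n * (21/16)^N * BB * Q" by (simp add: power_mult_distrib[symmetric])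
  finally have X: "(4/5)^N * DD * Q \<le> 16^n * (21/16)^N * BB * Q" .
  have "DD = BB * (39/21)^(N*kk)" unfolding DD_def BB_def tb by (rule power_mult_distrib)
  also have "(39/21::real)^(N*kk) \<ge> (39/21)^N"
    using kk by (intro power_increasing) auto
  hence "BB * (39/21::real)^N \<le> BB * (39/21)^(N*kk)" using Bp by simp
  finally have "BB * (39/21)^N \<le> DD" by simp
  hence "(4/5)^N * (BB * (39/21)^N) * Q \<le> (4/5)^N * DD * Q" using Q by simp
  with X have "BB * Q * ((4/5)^N * (39/21)^N) \<le> BB * Q * (16^n * (21/16)^N)"
    by (simp add: algebra_simps)
  hence "(4/5)^N * (39/21)^N \<le> 16^n * (21/16::real)^N" using Bp Q by simp
  hence "(4/5)^N * (39/21)^N * (16/21)^N \<le> 16^n * (21/16::real)^N * (16/21)^N"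
    by (intro mult_right_mono) auto
  also have "\<dots> = 16^n * ((21/16::real)^N * (16/21)^N)" by (simp only: mult.assoc)
  also have "(21/16::real)^N * (16/21)^N = 1" by (simp flip: power_mult_distrib)
  finally have "((4/5) * (39/21) * (16/21))^N \<le> (16::real)^n"
    by (simp only: power_mult_distrib mult_1_right)
  moreover have "(4/5) * (39/21) * (16/21) = (2496/2205::real)" by simp
  ultimately have "((2496/2205)^30)^n \<le> (16::real)^n" by (simp only: N power_mult)
  moreover obtain n' where "n = Suc n'" using n by (cases n) auto
  ultimately have "((2496/2205::real)^30)^Suc n' \<le> 16 ^ Suc n'" by simp
  hence "(2496/2205::real)^30 \<le> 16"
    by (rule power_le_imp_le_base) (rule zero_le_numeral)
  thus False using num_fact by simp
qed




lemma prod_pow_const: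
  fixes a :: "'a \<Rightarrow> real" and ee :: "'a \<Rightarrow> nat"
  shows "(\<Prod>w\<in>A. (k * a w ^ N) ^ ee w) = k ^ (\<Sum>w\<in>A. ee w) * (\<Prod>w\<in>A. a w ^ ee w) ^ N"
proof -
  have "(\<Prod>w\<in>A. (k * a w ^ N) ^ ee w) = (\<Prod>w\<in>A. k ^ ee w * (a w ^ ee w) ^ N)"
  proof (intro prod.cong refl)
    fix w
    have "(k * a w ^ N) ^ ee w = k ^ ee w * a w ^ (N * ee w)"
      by (simp only: power_mult_distrib power_mult)
    also have "N * ee w = ee w * N" by simp
    finally show "(k * a w ^ N) ^ ee w = k ^ ee w * (a w ^ ee w) ^ N" by (simp only: power_mult)
  qed
  also have "\<dots> = k ^ (\<Sum>w\<in>A. ee w) * (\<Prod>w\<in>A. a w ^ ee w) ^ N"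
    by (simp add: prod.distrib power_sum prod_power_distrib)
  finally show ?thesis .
qed

lemma norm_root_circle:
  assumes "u ^ N = (of_real t :: complex) ^ N" "t > 0" "N > 0"
  shows "cmod u = t"
proof -
  have "cmod u ^ N = cmod (u ^ N)" by (simp only: norm_power)
  also have "\<dots> = cmod ((of_real t :: complex) ^ N)" by (simp only: assms(1))
  also have "\<dots> = t ^ N" using assms(2) by (simp add: norm_power)
  finally have "cmod u ^ N = t ^ N" .
  thus ?thesis by (rule power_eq_imp_eq_base) (use assms in auto)
qed

context L begin

lemma ph_root: "j \<in> {1..n} \<Longrightarrow> poly ph (zh j) = 0"
  by (auto simp: ph_eval)

lemma annulus:
  assumes z: "z \<in> S" and j: "j \<in> {1..n}" and lo: "r z < cmod (zh j - z)" and hi: "cmod (zh j - z) \<le> 2 * r z"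
  shows False
proof -
  define t where "t = cmod (zh j - z)"
  have tpos: "t > 0" using lo r_pos[of z] unfolding t_def by linarith
  have E: "poly (p - ph) (zh j) = poly p (zh j)" using ph_root[OF j] by simp
  have A: "cmod (poly p (zh j)) * t \<le> r z * (21/64) * cmod (poly p (zh j))"
    using pointwise(2)[OF z t_def] lo hi E by (simp add: t_def)
  have "0 < cmod lc * t ^ order z p * cmod (Pprod p z) * exp (-1)"
    using lc0 tpos P_pos by simp
  also have "\<dots> \<le> cmod (poly p (zh j))"
    using pointwise(1)[OF z t_def] lo hi by (simp add: t_def)
  finally have pp: "cmod (poly p (zh j)) > 0" .
  from A have "cmod (poly p (zh j)) * t \<le> cmod (poly p (zh j)) * (r z * (21/64))"
    by (simp add: mult.commute)
  hence "t \<le> r z * (21/64)" using pp by simp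
  thus False using lo r_pos[of z] by (simp add: t_def)
qed

lemma circle_ph:
  assumes t: "t > 0" and N: "N > 0"
  shows "(\<Prod>u\<in>{u. u ^ N = of_real t ^ N}. cmod (poly ph (z + u)))
         = cmod lc ^ N * (\<Prod>j\<in>{1..n}. cmod (of_real t ^ N - (zh j - z) ^ N))"
proof -
  define Z where "Z = {u::complex. u ^ N = of_real t ^ N}"
  have c0: "(of_real t :: complex) ^ N \<noteq> 0" using t by simp
  have cardZ: "card Z = N" unfolding Z_def by (rule card_nth_roots[OF c0 N])
  have finZ: "finite Z" unfolding Z_def using N by auto
  have "(\<Prod>u\<in>Z. cmod (poly ph (z + u))) = (\<Prod>u\<in>Z. cmod lc * (\<Prod>j\<in>{1..n}. cmod (u - (zh j - z))))"
    by (intro prod.cong refl) (simp add: ph_eval norm_mult algebra_simps flip: prod_norm)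
  also have "\<dots> = cmod lc ^ N * (\<Prod>u\<in>Z. \<Prod>j\<in>{1..n}. cmod (u - (zh j - z)))"
    by (simp add: prod.distrib cardZ)
  also have "(\<Prod>u\<in>Z. \<Prod>j\<in>{1..n}. cmod (u - (zh j - z))) = (\<Prod>j\<in>{1..n}. \<Prod>u\<in>Z. cmod (u - (zh j - z)))"
    by (rule prod.swap)
  also have "\<dots> = (\<Prod>j\<in>{1..n}. cmod (of_real t ^ N - (zh j - z) ^ N))"
    unfolding Z_def by (intro prod.cong refl circle_prod t N)
  finally show ?thesis by (simp add: Z_def)
qed

lemma circle_p:
  assumes z: "z \<in> S" and t: "t > 0" and N: "N > 0"
  shows "(\<Prod>u\<in>{u. u ^ N = of_real t ^ N}. cmod (poly p (z + u)))
         = cmod lc ^ N * t ^ (order z p * N) *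
           (\<Prod>w\<in>S - {z}. cmod (of_real t ^ N - (w - z) ^ N) ^ order w p)"
proof -
  define Z where "Z = {u::complex. u ^ N = of_real t ^ N}"
  have c0: "(of_real t :: complex) ^ N \<noteq> 0" using t by simp
  have cardZ: "card Z = N" unfolding Z_def by (rule card_nth_roots[OF c0 N])
  have finZ: "finite Z" unfolding Z_def using N by auto
  have "(\<Prod>u\<in>Z. cmod (poly p (z + u))) =
        (\<Prod>u\<in>Z. cmod lc * (t ^ order z p * (\<Prod>w\<in>S - {z}. cmod (u - (w - z)) ^ order w p)))"
  proof (intro prod.cong refl)
    fix u assume u: "u \<in> Z"
    have nu: "cmod u = t" using u t N unfolding Z_def by (intro norm_root_circle) auto
    have "poly p (z + u) = lc * ((z + u - z) ^ order z p * (\<Prod>w\<in>S - {z}. (z + u - w) ^ order w p))"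
      using factor[of "z + u"] prod.remove[OF finS z, of "\<lambda>w. (z + u - w) ^ order w p"] by simp
    also have "(\<Prod>w\<in>S - {z}. (z + u - w) ^ order w p) = (\<Prod>w\<in>S - {z}. (u - (w - z)) ^ order w p)"
      by (intro prod.cong refl) (simp add: algebra_simps)
    finally have "poly p (z + u) = lc * (u ^ order z p * (\<Prod>w\<in>S - {z}. (u - (w - z)) ^ order w p))"
      by simp
    thus "cmod (poly p (z + u)) = cmod lc * (t ^ order z p * (\<Prod>w\<in>S - {z}. cmod (u - (w - z)) ^ order w p))"
      by (simp only: norm_mult norm_power prod_norm[symmetric] nu)
  qed
  also have "\<dots> = cmod lc ^ N * (t ^ order z p) ^ N * (\<Prod>u\<in>Z. \<Prod>w\<in>S - {z}. cmod (u - (w - z)) ^ order w p)"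
    by (simp add: prod.distrib cardZ)
  also have "(\<Prod>u\<in>Z. \<Prod>w\<in>S - {z}. cmod (u - (w - z)) ^ order w p)
           = (\<Prod>w\<in>S - {z}. (\<Prod>u\<in>Z. cmod (u - (w - z))) ^ order w p)"
    by (subst prod.swap) (simp add: prod_power_distrib)
  also have "\<dots> = (\<Prod>w\<in>S - {z}. cmod (of_real t ^ N - (w - z) ^ N) ^ order w p)"
    unfolding Z_def by (intro prod.cong refl arg_cong[where f = "\<lambda>x. x ^ _"] circle_prod t N)
  finally show ?thesis by (simp add: Z_def power_mult)
qed

end



context L begin

lemma count_ge:
  assumes z: "z \<in> S"
  shows "order z p \<le> card {j\<in>{1..n}. zh j \<in> cball z (r z)}"
proof (rule ccontr)
  define m where "m = order z p"
  define R where "R = r z"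
  define Inn where "Inn = {j\<in>{1..n}. zh j \<in> cball z (r z)}"
  define Out where "Out = {1..n} - Inn"
  define c where "c = card Inn"
  define N where "N = 30 * n"
  define ts where "ts = (21/20) * R"
  define tb where "tb = (39/20) * R"
  define y where "y = (\<lambda>j. zh j - z)"
  define P where "P = cmod (Pprod p z)"
  define Y where "Y = (\<Prod>j\<in>Out. cmod (y j))"
  define g where "g = (\<lambda>t j. if j \<in> Inn then t ^ N else cmod (y j) ^ N)"
  assume "\<not> order z p \<le> card {j\<in>{1..n}. zh j \<in> cball z (r z)}"
  hence cm: "c < m" by (simp add: c_def m_def Inn_def)
  have Rpos: "R > 0" using r_pos by (simp add: R_def)
  have tsp: "ts > 0" and tbp: "tb > 0" using Rpos by (simp_all add: ts_def tb_def)
  have Npos: "N > 0" and N2: "N \<ge> 15" using n2 by (simp_all add: N_def)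
  have Pp: "P > 0" using P_pos by (simp add: P_def)
  have npos: "real n > 0" using n2 by simp
  have finI: "finite Inn" and finO: "finite Out" and IO: "Inn \<subseteq> {1..n}"
    by (auto simp: Inn_def Out_def)
  have inI: "cmod (y j) \<le> R" if "j \<in> Inn" for j
    using that by (simp add: Inn_def y_def R_def dist_norm norm_minus_commute)
  have inO: "2 * R \<le> cmod (y j)" if "j \<in> Out" for j
  proof (rule ccontr)
    assume "\<not> 2 * R \<le> cmod (y j)"
    moreover have "j \<in> {1..n}" "R < cmod (y j)" using that
      by (auto simp: Out_def Inn_def y_def R_def dist_norm norm_minus_commute)
    ultimately show False using annulus[OF z, of j] by (simp add: y_def R_def)
  qed
  have Ynn: "Y \<ge> 0" by (simp add: Y_def prod_nonneg)
  have gdec: "(\<Prod>j\<in>{1..n}. g t j) = t ^ (N * c) * Y ^ N" for t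
  proof -
    have "(\<Prod>j\<in>{1..n}. g t j) = (\<Prod>j\<in>{1..n} - Inn. g t j) * (\<Prod>j\<in>Inn. g t j)"
      using IO by (intro prod.subset_diff) auto
    also have "(\<Prod>j\<in>Inn. g t j) = (\<Prod>j\<in>Inn. t ^ N)" by (intro prod.cong refl) (simp add: g_def)
    also have "\<dots> = t ^ (N * c)" by (simp add: c_def power_mult)
    also have "(\<Prod>j\<in>{1..n} - Inn. g t j) = (\<Prod>j\<in>Out. cmod (y j) ^ N)"
      unfolding Out_def by (intro prod.cong refl) (simp add: g_def)
    also have "\<dots> = Y ^ N" by (simp add: Y_def prod_power_distrib)
    finally show ?thesis by (simp only: mult.commute)
  qed
  have gnn: "g t j \<ge> 0" if "t \<ge> 0" for t j using that by (simp add: g_def)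
  have Rts: "2 * R ^ N \<le> ts ^ N"
  proof -
    have "(20/21::real) ^ N \<le> (20/21) ^ 15" using N2 by (intro power_decreasing) auto
    also have "(20/21::real) ^ 15 \<le> 1/2"
    proof -
      have "(20::real)^15 * 2 \<le> 21^15" by simp
      thus ?thesis by (simp add: power_divide field_simps)
    qed
    finally have "(20/21::real) ^ N \<le> 1/2" .
    moreover have "R ^ N = ts ^ N * (20/21) ^ N" by (simp add: ts_def power_mult_distrib[symmetric])
    ultimately have "R ^ N \<le> ts ^ N * (1/2)" using tsp
      by (simp add: mult_left_mono)
    thus ?thesis by simp
  qed
  have ylow: "g ts j / 2 \<le> cmod (of_real ts ^ N - y j ^ N)" if "j \<in> {1..n}" for j
  proof (cases "j \<in> Inn")
    case True
    have "cmod (y j) ^ N \<le> R ^ N" using inI[OF True] by (intro power_mono) auto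
    moreover have "ts ^ N - cmod (y j) ^ N \<le> cmod (of_real ts ^ N - y j ^ N)"
      using norm_triangle_ineq2[of "of_real ts ^ N" "y j ^ N"] tsp by (simp add: norm_power)
    ultimately show ?thesis using True Rts by (simp add: g_def)
  next
    case False
    hence jO: "j \<in> Out" using that by (simp add: Out_def)
    have "ts * (40/21) \<le> cmod (y j)" using inO[OF jO] by (simp add: ts_def)
    hence "(ts * (40/21)) ^ N \<le> cmod (y j) ^ N" using tsp by (intro power_mono) auto
    moreover have "(40/21::real) ^ N \<ge> (40/21) ^ 2" using N2 by (intro power_increasing) auto
    hence "(40/21::real) ^ N \<ge> 2" by (simp add: power2_eq_square) 
    hence "ts ^ N * 2 \<le> ts ^ N * (40/21) ^ N" using tsp by (intro mult_left_mono) auto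
    moreover have "(ts * (40/21)) ^ N = ts ^ N * (40/21) ^ N" by (rule power_mult_distrib)
    ultimately have "2 * ts ^ N \<le> cmod (y j) ^ N" by linarith
    moreover have "cmod (y j) ^ N - ts ^ N \<le> cmod (of_real ts ^ N - y j ^ N)"
      using norm_triangle_ineq3[of "y j ^ N" "of_real ts ^ N"] tsp
      by (simp add: norm_power norm_minus_commute)
    ultimately show ?thesis using False by (simp add: g_def)
  qed
  have yup: "cmod (of_real tb ^ N - y j ^ N) \<le> 2 * g tb j" if "j \<in> {1..n}" for j
  proof -
    have tri: "cmod (of_real tb ^ N - y j ^ N) \<le> tb ^ N + cmod (y j) ^ N"
      using norm_triangle_ineq4[of "of_real tb ^ N" "y j ^ N"] tbp by (simp add: norm_power)
    show ?thesis
    proof (cases "j \<in> Inn")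
      case True
      have "cmod (y j) ^ N \<le> tb ^ N" using inI[OF True] Rpos by (intro power_mono) (auto simp: tb_def)
      thus ?thesis using tri True by (simp add: g_def)
    next
      case False
      hence jO: "j \<in> Out" using that by (simp add: Out_def)
      have "tb ^ N \<le> cmod (y j) ^ N" using inO[OF jO] tbp by (intro power_mono) (auto simp: tb_def)
      thus ?thesis using tri False by (simp add: g_def)
    qed
  qed
  have Yts: "(1/2) ^ n * (ts ^ (N * c) * Y ^ N) \<le> (\<Prod>j\<in>{1..n}. cmod (of_real ts ^ N - y j ^ N))"
  proof -
    have "(\<Prod>j\<in>{1..n}. g ts j / 2) \<le> (\<Prod>j\<in>{1..n}. cmod (of_real ts ^ N - y j ^ N))"
      using ylow gnn tsp by (intro prod_mono) auto
    moreover have "(\<Prod>j\<in>{1..n}. g ts j / 2) = (1/2) ^ n * (\<Prod>j\<in>{1..n}. g ts j)"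
      by (simp add: prod_dividef field_simps)
    ultimately show ?thesis using gdec[of ts] gdec[of tb] by simp
  qed
  have Ytb: "(\<Prod>j\<in>{1..n}. cmod (of_real tb ^ N - y j ^ N)) \<le> 2 ^ n * (tb ^ (N * c) * Y ^ N)"
  proof -
    have "(\<Prod>j\<in>{1..n}. cmod (of_real tb ^ N - y j ^ N)) \<le> (\<Prod>j\<in>{1..n}. 2 * g tb j)"
      using yup by (intro prod_mono) auto
    moreover have "(\<Prod>j\<in>{1..n}. 2 * g tb j) = 2 ^ n * (\<Prod>j\<in>{1..n}. g tb j)"
      by (simp add: prod.distrib)
    ultimately show ?thesis using gdec[of ts] gdec[of tb] by simp
  qed
  have dfar: "4 * R \<le> cmod (w - z)" if w: "w \<in> S - {z}" for w
  proof -
    have "sep p z \<le> cmod (z - w)" using sep_le[OF z] w by auto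
    moreover have "2 * real n * R \<le> sep p z" using c2[OF z] npos by (simp add: R_def field_simps)
    moreover have "4 * R \<le> 2 * real n * R" using n2 Rpos by (intro mult_right_mono) auto
    ultimately show ?thesis using norm_minus_commute[of z w] by linarith
  qed
  have sumo: "(\<Sum>w\<in>S - {z}. order w p) = n - m" using sum_other[OF z] by (simp add: m_def)
  have PN: "(\<Prod>w\<in>S - {z}. cmod (w - z) ^ order w p) = P"
    by (simp add: P_def P_eq norm_minus_commute)
  have Pts: "(\<Prod>w\<in>S - {z}. cmod (of_real ts ^ N - (w - z) ^ N) ^ order w p) \<le> 2 ^ n * P ^ N"
  proof -
    have "(\<Prod>w\<in>S - {z}. cmod (of_real ts ^ N - (w - z) ^ N) ^ order w p)
          \<le> (\<Prod>w\<in>S - {z}. (2 * cmod (w - z) ^ N) ^ order w p)"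
    proof (intro prod_mono conjI power_mono)
      fix w assume w: "w \<in> S - {z}"
      have "ts \<le> cmod (w - z)" using dfar[OF w] Rpos by (simp add: ts_def)
      hence "ts ^ N \<le> cmod (w - z) ^ N" using tsp by (intro power_mono) auto
      moreover have "cmod (of_real ts ^ N - (w - z) ^ N) \<le> ts ^ N + cmod (w - z) ^ N"
        using norm_triangle_ineq4[of "of_real ts ^ N" "(w - z) ^ N"] tsp by (simp add: norm_power)
      ultimately show "cmod (of_real ts ^ N - (w - z) ^ N) \<le> 2 * cmod (w - z) ^ N" by simp
    qed auto
    also have "\<dots> = 2 ^ (n - m) * P ^ N" by (simp only: prod_pow_const sumo PN)
    also have "\<dots> \<le> 2 ^ n * P ^ N" using Pp by (intro mult_right_mono power_increasing) auto
    finally show ?thesis .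
  qed
  have Ptb: "(1/2) ^ n * P ^ N \<le> (\<Prod>w\<in>S - {z}. cmod (of_real tb ^ N - (w - z) ^ N) ^ order w p)"
  proof -
    have "(1/2) ^ n * P ^ N \<le> (1/2) ^ (n - m) * P ^ N"
      using Pp by (intro mult_right_mono power_decreasing) auto
    also have "\<dots> = (\<Prod>w\<in>S - {z}. ((1/2) * cmod (w - z) ^ N) ^ order w p)"
      by (simp only: prod_pow_const sumo PN)
    also have "\<dots> \<le> (\<Prod>w\<in>S - {z}. cmod (of_real tb ^ N - (w - z) ^ N) ^ order w p)"
    proof (intro prod_mono conjI power_mono)
      fix w assume w: "w \<in> S - {z}"
      have "2 * tb \<le> cmod (w - z)" using dfar[OF w] Rpos by (simp add: tb_def)
      hence "(2 * tb) ^ N \<le> cmod (w - z) ^ N" using tbp by (intro power_mono) auto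
      moreover have "(2 * tb) ^ N = 2 ^ N * tb ^ N" by (rule power_mult_distrib)
      moreover have "(2::real) \<le> 2 ^ N" using Npos
        by (metis One_nat_def Suc_leI power_increasing power_one_right one_le_numeral)
      moreover have "2 * tb ^ N \<le> 2 ^ N * tb ^ N" using \<open>(2::real) \<le> 2 ^ N\<close> tbp
        by (intro mult_right_mono) auto
      moreover have "cmod (w - z) ^ N - tb ^ N \<le> cmod (of_real tb ^ N - (w - z) ^ N)"
        using norm_triangle_ineq3[of "(w - z) ^ N" "of_real tb ^ N"] tbp
        by (simp add: norm_power norm_minus_commute)
      ultimately show "(1/2) * cmod (w - z) ^ N \<le> cmod (of_real tb ^ N - (w - z) ^ N)" by simp
    qed auto
    finally show ?thesis .
  qed
  have circ: "cmod (z + u - z) = t" if "u ^ N = of_real t ^ N" "t > 0" for u t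
    using norm_root_circle[OF that Npos] by simp
  have pts: "cmod (poly ph (z + u)) \<le> (21/16) * cmod (poly p (z + u))" if u: "u ^ N = of_real ts ^ N" for u
  proof -
    have A: "cmod (poly (p - ph) (z + u)) * ts \<le> R * (21/64) * cmod (poly p (z + u))"
      using pointwise(2)[OF z circ[OF u tsp, symmetric]] Rpos by (simp add: ts_def R_def)
    have "cmod (poly (p - ph) (z + u)) * (21/20) * R \<le> (21/64) * cmod (poly p (z + u)) * R"
      using A by (simp add: ts_def algebra_simps)
    hence "cmod (poly (p - ph) (z + u)) * (21/20) \<le> (21/64) * cmod (poly p (z + u))"
      using Rpos by simp
    hence E: "cmod (poly (p - ph) (z + u)) \<le> (5/16) * cmod (poly p (z + u))" by simp
    have "poly ph (z + u) = poly p (z + u) - poly (p - ph) (z + u)" by simp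
    hence "cmod (poly ph (z + u)) \<le> cmod (poly p (z + u)) + cmod (poly (p - ph) (z + u))"
      by (metis norm_triangle_ineq4)
    thus ?thesis using E by simp
  qed
  have ptb: "(4/5) * cmod (poly p (z + u)) \<le> cmod (poly ph (z + u))" if u: "u ^ N = of_real tb ^ N" for u
  proof -
    have A: "cmod (poly (p - ph) (z + u)) * tb \<le> R * (21/64) * cmod (poly p (z + u))"
      using pointwise(2)[OF z circ[OF u tbp, symmetric]] Rpos by (simp add: tb_def R_def)
    have "cmod (poly (p - ph) (z + u)) * (39/20) * R \<le> (21/64) * cmod (poly p (z + u)) * R"
      using A by (simp add: tb_def algebra_simps)
    hence "cmod (poly (p - ph) (z + u)) * (39/20) \<le> (21/64) * cmod (poly p (z + u))"
      using Rpos by simp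
    hence E: "cmod (poly (p - ph) (z + u)) \<le> (1/5) * cmod (poly p (z + u))"
      using norm_ge_zero[of "poly p (z + u)"] by linarith
    have "poly ph (z + u) = poly p (z + u) - poly (p - ph) (z + u)" by simp
    hence "cmod (poly p (z + u)) - cmod (poly (p - ph) (z + u)) \<le> cmod (poly ph (z + u))"
      by (metis norm_triangle_ineq2)
    thus ?thesis using E by simp
  qed
  define Zs where "Zs = {u::complex. u ^ N = of_real ts ^ N}"
  define Zb where "Zb = {u::complex. u ^ N = of_real tb ^ N}"
  have cZs: "card Zs = N" unfolding Zs_def using tsp Npos by (intro card_nth_roots) auto
  have cZb: "card Zb = N" unfolding Zb_def using tbp Npos by (intro card_nth_roots) auto
  have prods: "(\<Prod>u\<in>Zs. cmod (poly ph (z + u))) \<le> (21/16) ^ N * (\<Prod>u\<in>Zs. cmod (poly p (z + u)))"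
  proof -
    have "(\<Prod>u\<in>Zs. cmod (poly ph (z + u))) \<le> (\<Prod>u\<in>Zs. (21/16) * cmod (poly p (z + u)))"
      using pts by (intro prod_mono) (auto simp: Zs_def)
    also have "\<dots> = (21/16) ^ N * (\<Prod>u\<in>Zs. cmod (poly p (z + u)))"
      by (simp only: prod.distrib prod_constant cZs)
    finally show ?thesis .
  qed
  have prodb: "(4/5) ^ N * (\<Prod>u\<in>Zb. cmod (poly p (z + u))) \<le> (\<Prod>u\<in>Zb. cmod (poly ph (z + u)))"
  proof -
    have "(4/5) ^ N * (\<Prod>u\<in>Zb. cmod (poly p (z + u))) = (\<Prod>u\<in>Zb. (4/5) * cmod (poly p (z + u)))"
      by (simp only: prod.distrib prod_constant cZb)
    also have "\<dots> \<le> (\<Prod>u\<in>Zb. cmod (poly ph (z + u)))"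
      using ptb by (intro prod_mono) (auto simp: Zb_def)
    finally show ?thesis .
  qed
  define LL where "LL = cmod lc ^ N"
  have LLp: "LL > 0" using lc0 by (simp add: LL_def)
  have h1: "LL * (1/2)^n * ts^(N*c) * Y ^ N \<le> (21/16)^N * LL * ts^(m*N) * 2^n * P ^ N"
  proof -
    have "LL * (1/2)^n * ts^(N*c) * Y ^ N = LL * ((1/2)^n * (ts^(N*c) * Y ^ N))" by (simp only: mult.assoc)
    also have "\<dots> \<le> LL * (\<Prod>j\<in>{1..n}. cmod (of_real ts ^ N - y j ^ N))"
      using Yts LLp by (intro mult_left_mono) auto
    also have "\<dots> = (\<Prod>u\<in>Zs. cmod (poly ph (z + u)))"
      unfolding Zs_def LL_def y_def using circle_ph[OF tsp Npos, of z] by simp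
    also have "\<dots> \<le> (21/16) ^ N * (\<Prod>u\<in>Zs. cmod (poly p (z + u)))" by (rule prods)
    also have "(\<Prod>u\<in>Zs. cmod (poly p (z + u))) =
        LL * ts ^ (m * N) * (\<Prod>w\<in>S - {z}. cmod (of_real ts ^ N - (w - z) ^ N) ^ order w p)"
      unfolding Zs_def LL_def m_def by (rule circle_p[OF z tsp Npos])
    also have "(21/16) ^ N * \<dots> \<le> (21/16) ^ N * (LL * ts ^ (m * N) * (2 ^ n * P ^ N))"
      using Pts LLp tsp by (intro mult_left_mono) auto
    finally show ?thesis by (simp only: mult.assoc mult.left_commute)
  qed
  have h2: "(4/5)^N * LL * tb^(m*N) * (1/2)^n * P ^ N \<le> LL * 2^n * tb^(N*c) * Y ^ N"
  proof -
    have "(4/5)^N * LL * tb^(m*N) * (1/2)^n * P ^ N = (4/5)^N * (LL * tb^(m*N) * ((1/2)^n * P ^ N))"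
      by (simp only: mult.assoc)
    also have "\<dots> \<le> (4/5)^N * (LL * tb^(m*N) * (\<Prod>w\<in>S - {z}. cmod (of_real tb ^ N - (w - z) ^ N) ^ order w p))"
      using Ptb LLp tbp by (intro mult_left_mono) auto
    also have "LL * tb^(m*N) * (\<Prod>w\<in>S - {z}. cmod (of_real tb ^ N - (w - z) ^ N) ^ order w p)
        = (\<Prod>u\<in>Zb. cmod (poly p (z + u)))"
      unfolding Zb_def LL_def m_def by (rule circle_p[OF z tbp Npos, symmetric])
    also have "(4/5) ^ N * \<dots> \<le> (\<Prod>u\<in>Zb. cmod (poly ph (z + u)))" by (rule prodb)
    also have "\<dots> = LL * (\<Prod>j\<in>{1..n}. cmod (of_real tb ^ N - y j ^ N))"
      unfolding Zb_def LL_def y_def using circle_ph[OF tbp Npos, of z] by simp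
    also have "\<dots> \<le> LL * (2 ^ n * (tb ^ (N * c) * Y ^ N))"
      using Ytb LLp by (intro mult_left_mono) auto
    finally show ?thesis by (simp only: mult.assoc)
  qed
  show False
    using final_contra[OF LLp _ _ tsp _ cm N_def _ h1 h2] Pp Ynn n2
    by (simp add: tb_def ts_def)
qed

end



context L begin

lemma r_sep_dist: "z \<in> S \<Longrightarrow> w \<in> S \<Longrightarrow> z \<noteq> w \<Longrightarrow> r z \<le> cmod (z - w) / (2 * real n)"
proof -
  assume z: "z \<in> S" and w: "w \<in> S" and zw: "z \<noteq> w"
  have "sep p z \<le> cmod (z - w)" using sep_le[OF z w] zw by auto
  hence "sep p z / (2 * real n) \<le> cmod (z - w) / (2 * real n)" using n2 by (intro divide_right_mono) auto
  thus ?thesis using c2[OF z] by linarith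
qed

lemma main_result:
  shows "(\<forall>z\<in>root_set p. card {j\<in>{1..n}. zh j \<in> cball z (r z)} = order z p) \<and>
         (\<forall>z\<in>root_set p. \<forall>w\<in>root_set p. z \<noteq> w \<longrightarrow>
            (\<forall>j\<in>{1..n}. \<forall>l\<in>{1..n}. zh j \<in> cball z (r z) \<longrightarrow> zh l \<in> cball w (r w) \<longrightarrow>
               (1 - 1 / real n) * cmod (z - w) \<le> cmod (zh j - zh l) \<and>
               cmod (zh j - zh l) \<le> (1 + 1 / real n) * cmod (z - w)))"
proof (intro conjI ballI impI allI)
  have npos: "real n > 0" using n2 by simp
  have close2: "r z + r w \<le> cmod (z - w) / real n" if "z \<in> S" "w \<in> S" "z \<noteq> w" for z w
  proof -
    have "r z \<le> cmod (z - w) / (2 * real n)" by (rule r_sep_dist[OF that])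
    moreover have "r w \<le> cmod (z - w) / (2 * real n)"
      using r_sep_dist[of w z] that by (simp add: norm_minus_commute)
    ultimately show ?thesis by (simp add: field_simps)
  qed
  define Ic where "Ic = (\<lambda>z. {j\<in>{1..n}. zh j \<in> cball z (r z)})"
  have disj: "Ic z \<inter> Ic w = {}" if "z \<in> S" "w \<in> S" "z \<noteq> w" for z w
  proof (rule ccontr)
    assume "Ic z \<inter> Ic w \<noteq> {}"
    then obtain j where "cmod (z - zh j) \<le> r z" "cmod (w - zh j) \<le> r w"
      by (auto simp: Ic_def dist_norm)
    moreover have "cmod (z - w) \<le> cmod (z - zh j) + cmod (w - zh j)"
      using norm_triangle_ineq4[of "z - zh j" "w - zh j"] by simp
    moreover have "cmod (z - w) / real n < cmod (z - w)"
      using that n2 by (simp add: divide_less_eq)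
    ultimately show False using close2[OF that] by linarith
  qed
  have ge: "order z p \<le> card (Ic z)" if "z \<in> S" for z
    unfolding Ic_def by (rule count_ge[OF that])
  have sumc: "(\<Sum>z\<in>S. card (Ic z)) \<le> n"
  proof -
    have "(\<Sum>z\<in>S. card (Ic z)) = card (\<Union>z\<in>S. Ic z)"
      using finS disj by (intro card_UN_disjoint[symmetric]) (auto simp: Ic_def)
    also have "\<dots> \<le> card {1..n}" by (intro card_mono) (auto simp: Ic_def)
    finally show ?thesis by simp
  qed
  fix z assume z: "z \<in> root_set p"
  show "card {j\<in>{1..n}. zh j \<in> cball z (r z)} = order z p"
  proof (rule ccontr)
    assume "card {j\<in>{1..n}. zh j \<in> cball z (r z)} \<noteq> order z p"
    hence "order z p < card (Ic z)" using ge[OF z] by (simp add: Ic_def)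
    hence "(\<Sum>z\<in>S. order z p) < (\<Sum>z\<in>S. card (Ic z))"
      using finS ge z by (intro sum_strict_mono_ex1) auto
    thus False using sumc degsum by simp
  qed
next
  fix z w j l
  assume z: "z \<in> root_set p" and w: "w \<in> root_set p" and zw: "z \<noteq> w"
    and j: "j \<in> {1..n}" and l: "l \<in> {1..n}"
    and jz: "zh j \<in> cball z (r z)" and lw: "zh l \<in> cball w (r w)"
  have npos: "real n > 0" using n2 by simp
  have c2': "r z + r w \<le> cmod (z - w) / real n"
  proof -
    have "r z \<le> cmod (z - w) / (2 * real n)" by (rule r_sep_dist[OF z w zw])
    moreover have "r w \<le> cmod (z - w) / (2 * real n)"
      using r_sep_dist[OF w z] zw by (simp add: norm_minus_commute)
    ultimately show ?thesis by (simp add: field_simps)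
  qed
  have a: "cmod (zh j - z) \<le> r z" using jz by (simp add: dist_norm norm_minus_commute)
  have bb: "cmod (zh l - w) \<le> r w" using lw by (simp add: dist_norm norm_minus_commute)
  have eq: "zh j - zh l = (zh j - z) + (z - w) - (zh l - w)" by simp
  have up: "cmod (zh j - zh l) \<le> cmod (zh j - z) + cmod (z - w) + cmod (zh l - w)"
  proof -
    have "cmod ((zh j - z) + (z - w) - (zh l - w)) \<le> cmod ((zh j - z) + (z - w)) + cmod (zh l - w)"
      by (rule norm_triangle_ineq4)
    moreover have "cmod ((zh j - z) + (z - w)) \<le> cmod (zh j - z) + cmod (z - w)"
      by (rule norm_triangle_ineq)
    ultimately show ?thesis unfolding eq by linarith
  qed
  have lo: "cmod (z - w) \<le> cmod (zh j - zh l) + cmod (zh j - z) + cmod (zh l - w)"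
  proof -
    have "z - w = (zh j - zh l) - (zh j - z) + (zh l - w)" by simp
    hence "cmod (z - w) \<le> cmod ((zh j - zh l) - (zh j - z)) + cmod (zh l - w)"
      using norm_triangle_ineq[of "(zh j - zh l) - (zh j - z)" "zh l - w"] by simp
    moreover have "cmod ((zh j - zh l) - (zh j - z)) \<le> cmod (zh j - zh l) + cmod (zh j - z)"
      by (rule norm_triangle_ineq4)
    ultimately show ?thesis by linarith
  qed
  have e1: "(1 - 1 / real n) * cmod (z - w) = cmod (z - w) - cmod (z - w) / real n" by (simp add: algebra_simps)
  have e2: "(1 + 1 / real n) * cmod (z - w) = cmod (z - w) + cmod (z - w) / real n" by (simp add: algebra_simps)
  show "(1 - 1 / real n) * cmod (z - w) \<le> cmod (zh j - zh l)"
    using e1 lo a bb c2' by linarith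
  show "cmod (zh j - zh l) \<le> (1 + 1 / real n) * cmod (z - w)"
    using e2 up a bb c2' by linarith
qed

end

theorem lemma7:
  fixes p :: "complex poly" and zh :: "nat \<Rightarrow> complex" and b :: nat
  defines "n \<equiv> degree p"
  defines "ph \<equiv> smult (lead_coeff p) (\<Prod>j\<in>{1..n}. [:- zh j, 1:])"
  defines "r \<equiv> (\<lambda>z. (2::real) powr (- real b / (2 * real (order z p))))"
  assumes n2: "n \<ge> 2"
    and k2: "card (root_set p) \<ge> 2"
    and close: "norm1 (p - ph) \<le> 2 powr (- real b) * norm1 p"
    and bpow: "\<exists>t::nat. b = 2 ^ t"
    and bbig: "real b \<ge> max (8 * real n) (real n * log 2 (real n))"
    and c1: "\<And>z. z \<in> root_set p \<Longrightarrow> r z \<le> 1 / (2 * real n ^ 2)"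
    and c2: "\<And>z. z \<in> root_set p \<Longrightarrow> r z \<le> sep p z / (2 * real n)"
    and c3: "\<And>z. z \<in> root_set p \<Longrightarrow>
              2 powr (- real b / 2) \<le> cmod (Pprod p z) / (16 * (real n + 1) * 2 ^ tau p * Mx z ^ n)"
  shows "(\<forall>z\<in>root_set p. card {j\<in>{1..n}. zh j \<in> cball z (r z)} = order z p) \<and>
         (\<forall>z\<in>root_set p. \<forall>w\<in>root_set p. z \<noteq> w \<longrightarrow>
            (\<forall>j\<in>{1..n}. \<forall>l\<in>{1..n}. zh j \<in> cball z (r z) \<longrightarrow> zh l \<in> cball w (r w) \<longrightarrow>
               (1 - 1 / real n) * cmod (z - w) \<le> cmod (zh j - zh l) \<and>
               cmod (zh j - zh l) \<le> (1 + 1 / real n) * cmod (z - w)))"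
proof -
  interpret L p zh b n ph r
  proof
    show "n = degree p" by (simp add: n_def)
    show "ph = smult (lead_coeff p) (\<Prod>j\<in>{1..n}. [:- zh j, 1:])" by (simp add: ph_def)
    show "r = (\<lambda>z. (2::real) powr (- real b / (2 * real (order z p))))" by (simp add: r_def)
  qed (fact n2 k2 close c1 c2 c3)+
  show ?thesis by (rule main_result)
qed



end
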